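(* Let $A$ be a Banach algebra and $(\pi_1,X,\pi_2)$ a Banach $A$-module such that both module actions $\pi_1$ and $\pi_2$ are Arens regular. Let $D:A\to X^*$ be an inner derivation, i.e. there is $x^*\in X^*$ with $D(a)=\pi_1^*(x^*,a)-\pi_2^{r*r}(a,x^* )$ for all $a\in A$. Then $D$ is weakly compact. Moreover, $D^{**}:(A^{**},\Box)\to X^{***}$ and $D^{**}:(A^{**},\lozenge)\to X^{***}$ are inner derivations; namely, for all $a^{**}\in A^{**}$, $$D^{**}(a^{**})=\pi_1^{****}(x^*,a^{**})-\pi_2^{***r*r}(a^{**},x^* )=\pi_1^{r***r*}(x^*,a^{**})-\pi_2^{r****r}(a^{**},x^* ).$$
   Context: Normed spaces are identified with their canonical images in their second duals (so $X^*\subseteq X^{***}$). For a bounded bilinear map $f:X\times Y\to Z$, the adjoint $f^*:Z^*\times X\to Y^*$ is defined by $\langle f^*(z^*,x),y\rangle=\langle z^*,f(x,y)\rangle$; iterating gives $f^{**}$, $f^{***}:X^{**}\times Y^{**}\to Z^{**}$, $f^{****}$, etc. The flip is $f^r(y,x)=f(x,y)$; superscripts are applied successively left to right. $f$ is Arens regular if $f^{***}=f^{r***r}$. For the multiplication $\pi$ of $A$, the Arens products on $A^{**}$ are $\Box=\pi^{***}$ and $\lozenge=\pi^{r***r}$. A Banach $A$-module $(\pi_1,X,\pi_2)$ consists of a Banach space $X$ and bounded bilinear maps $\pi_1:A\times X\to X$, $\pi_2:X\times A\to X$ with $\pi_1(ab,x)=\pi_1(a,\pi_1(b,x))$, $\pi_2(x,ab)=\pi_2(\pi_2(x,a),b)$,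 $\pi_1(a,\pi_2(x,b))=\pi_2(\pi_1(a,x),b)$. A derivation $D:A\to X^*$ is a bounded linear map with $D(ab)=\pi_1^*(D(a),b)+\pi_2^{r*r}(a,D(b))$. $X^{***}$ is an $(A^{**},\Box)$-module with left action $\pi_2^{***r*r}$ and right action $\pi_1^{****}$, and an $(A^{**},\lozenge)$-module with left action $\pi_2^{r****r}$ and right action $\pi_1^{r***r*}$; a derivation $\Delta$ from $A^{**}$ (with one of these products) into $X^{***}$ is inner if $\Delta(a^{**})=\xi\cdot a^{**}-a^{**}\cdot\xi$ for some $\xi\in X^{***}$, using the corresponding module actions. $D^{**}$ is the second adjoint of $D$. *)

theory Defs
  imports "HOL-Analysis.Analysis"
begin

definition can :: "'b::real_normed_vector \<Rightarrow> (('b \<Rightarrow>\<^sub>L real) \<Rightarrow>\<^sub>L real)" where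
  "can x = Blinfun (\<lambda>f. blinfun_apply f x)"

text \<open>Adjoint of a bilinear map f : X \<times> Y \<rightarrow> Z, giving f* : Z* \<times> X \<rightarrow> Y*.\<close>
definition adj :: "('x \<Rightarrow> 'y::real_normed_vector \<Rightarrow> 'z::real_normed_vector)
    \<Rightarrow> ('z \<Rightarrow>\<^sub>L real) \<Rightarrow> 'x \<Rightarrow> ('y \<Rightarrow>\<^sub>L real)" where
  "adj f zs x = Blinfun (\<lambda>y. blinfun_apply zs (f x y))"

definition flip :: "('x \<Rightarrow> 'y \<Rightarrow> 'z) \<Rightarrow> 'y \<Rightarrow> 'x \<Rightarrow> 'z" where
  "flip f y x = f x y"

definition ladj :: "('a::real_normed_vector \<Rightarrow> 'b::real_normed_vector)
    \<Rightarrow> ('b \<Rightarrow>\<^sub>L real) \<Rightarrow> ('a \<Rightarrow>\<^sub>L real)" where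
  "ladj T g = Blinfun (\<lambda>a. blinfun_apply g (T a))"

definition arens_regular :: "('x::real_normed_vector \<Rightarrow> 'y::real_normed_vector \<Rightarrow> 'z::real_normed_vector) \<Rightarrow> bool" where
  "arens_regular f \<longleftrightarrow> adj (adj (adj f)) = flip (adj (adj (adj (flip f))))"

definition weak_topology :: "'b::real_normed_vector topology" where
  "weak_topology = topology_generated_by
     {blinfun_apply f -` U | (f :: 'b \<Rightarrow>\<^sub>L real) U. open U}"

definition weakly_compact_op :: "('a::real_normed_vector \<Rightarrow> 'b::real_normed_vector) \<Rightarrow> bool" where
  "weakly_compact_op T \<longleftrightarrow> bounded_linear T \<and>
     compactin weak_topology (weak_topology closure_of (T ` cball 0 1))"

definition banach_module :: "('a::real_normed_algebra \<Rightarrow> 'x::real_normed_vector \<Rightarrow> 'x) \<Rightarrow> ('x \<Rightarrow> 'a \<Rightarrow> 'x) \<Rightarrow> bool" where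
  "banach_module p1 p2 \<longleftrightarrow> bounded_bilinear p1 \<and> bounded_bilinear p2 \<and>
     (\<forall>a b x. p1 (a * b) x = p1 a (p1 b x)) \<and>
     (\<forall>a b x. p2 x (a * b) = p2 (p2 x a) b) \<and>
     (\<forall>a b x. p1 a (p2 x b) = p2 (p1 a x) b)"

definition derivation :: "('a \<Rightarrow> 'a \<Rightarrow> 'a) \<Rightarrow> ('a \<Rightarrow> 'm \<Rightarrow> 'm) \<Rightarrow> ('m \<Rightarrow> 'a \<Rightarrow> 'm)
    \<Rightarrow> ('a::real_normed_vector \<Rightarrow> 'm::real_normed_vector) \<Rightarrow> bool" where
  "derivation m L R \<Delta> \<longleftrightarrow> bounded_linear \<Delta> \<and> (\<forall>a b. \<Delta> (m a b) = R (\<Delta> a) b + L a (\<Delta> b))"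

definition inner_derivation :: "('a \<Rightarrow> 'a \<Rightarrow> 'a) \<Rightarrow> ('a \<Rightarrow> 'm \<Rightarrow> 'm) \<Rightarrow> ('m \<Rightarrow> 'a \<Rightarrow> 'm)
    \<Rightarrow> ('a::real_normed_vector \<Rightarrow> 'm::real_normed_vector) \<Rightarrow> bool" where
  "inner_derivation m L R \<Delta> \<longleftrightarrow> derivation m L R \<Delta> \<and> (\<exists>\<xi>. \<forall>a. \<Delta> a = R \<xi> a - L a \<xi>)"

end

theory Submission
  imports Defs
begin


declare plus_blinfun.rep_eq[simp] minus_blinfun.rep_eq[simp] scaleR_blinfun.rep_eq[simp] uminus_blinfun.rep_eq[simp]

lemma flip_apply[simp]: "flip f y x = f x y" by (simp add: flip_def)

lemma bb_flip[simp]: "bounded_bilinear f \<Longrightarrow> bounded_bilinear (flip f)"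
  unfolding flip_def by (rule bounded_bilinear.flip)

lemma bl_adj_inner: "bounded_bilinear f \<Longrightarrow> bounded_linear (\<lambda>y. blinfun_apply zs (f x y))"
  by (rule bounded_linear_compose[OF blinfun.bounded_linear_right bounded_bilinear.bounded_linear_right])

lemma adj_apply[simp]: "bounded_bilinear f \<Longrightarrow> blinfun_apply (adj f zs x) y = blinfun_apply zs (f x y)"
  unfolding adj_def by (simp add: bounded_linear_Blinfun_apply bl_adj_inner)

lemma bb_adj[simp]: assumes "bounded_bilinear f" shows "bounded_bilinear (adj f)"
proof -
  interpret f: bounded_bilinear f by fact
  obtain K where K: "\<And>x y. norm (f x y) \<le> norm x * norm y * K" "K > 0"
    using f.pos_bounded by (auto simp: ac_simps)
  show ?thesis
  proof
    fix a a' :: "'c \<Rightarrow>\<^sub>L real" and b b' and r :: real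
    show "adj f (a + a') b = adj f a b + adj f a' b"
      by (rule blinfun_eqI) (simp add: assms blinfun.add_left)
    show "adj f a (b + b') = adj f a b + adj f a b'"
      by (rule blinfun_eqI) (simp add: assms f.add_left blinfun.add_right)
    show "adj f (r *\<^sub>R a) b = r *\<^sub>R adj f a b"
      by (rule blinfun_eqI) (simp add: assms)
    show "adj f a (r *\<^sub>R b) = r *\<^sub>R adj f a b"
      by (rule blinfun_eqI) (simp add: assms f.scaleR_left blinfun.scaleR_right)
  next
    show "\<exists>K. \<forall>a b. norm (adj f a b) \<le> norm a * norm b * K"
    proof (intro exI allI)
      fix a :: "'c \<Rightarrow>\<^sub>L real" and b
      show "norm (adj f a b) \<le> norm a * norm b * K"
      proof (rule norm_blinfun_bound)
        show "0 \<le> norm a * norm b * K" using K by simp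
        fix y
        have "norm (blinfun_apply (adj f a b) y) = norm (blinfun_apply a (f b y))" using assms by simp
        also have "\<dots> \<le> norm a * norm (f b y)" by (rule norm_blinfun)
        also have "\<dots> \<le> norm a * (norm b * norm y * K)" by (rule mult_left_mono[OF K(1)]) simp
        finally show "norm (blinfun_apply (adj f a b) y) \<le> norm a * norm b * K * norm y" by (simp add: ac_simps)
      qed
    qed
  qed
qed


lemma bl_ladj_inner: "bounded_linear T \<Longrightarrow> bounded_linear (\<lambda>a. blinfun_apply g (T a))"
  by (rule bounded_linear_compose[OF blinfun.bounded_linear_right])

lemma ladj_apply[simp]: "bounded_linear T \<Longrightarrow> blinfun_apply (ladj T g) a = blinfun_apply g (T a)"
  unfolding ladj_def by (simp add: bounded_linear_Blinfun_apply bl_ladj_inner)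

lemma bl_ladj[simp]: assumes "bounded_linear T" shows "bounded_linear (ladj T)"
proof -
  interpret T: bounded_linear T by fact
  obtain K where K: "\<And>x. norm (T x) \<le> norm x * K" "K > 0" using T.pos_bounded by auto
  show ?thesis
  proof (rule bounded_linear_intro[where K=K])
    fix g h :: "'b \<Rightarrow>\<^sub>L real" and r :: real
    show "ladj T (g + h) = ladj T g + ladj T h" by (rule blinfun_eqI) (simp add: assms)
    show "ladj T (r *\<^sub>R g) = r *\<^sub>R ladj T g" by (rule blinfun_eqI) (simp add: assms)
    show "norm (ladj T g) \<le> norm g * K"
    proof (rule norm_blinfun_bound)
      show "0 \<le> norm g * K" using K by simp
      fix a
      have "norm (blinfun_apply (ladj T g) a) \<le> norm g * norm (T a)" using assms norm_blinfun[of g "T a"] by simp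
      also have "\<dots> \<le> norm g * (norm a * K)" by (rule mult_left_mono[OF K(1)]) simp
      finally show "norm (blinfun_apply (ladj T g) a) \<le> norm g * K * norm a" by (simp add: ac_simps)
    qed
  qed
qed

lemma can_apply[simp]: "blinfun_apply (can x) f = blinfun_apply f x"
  unfolding can_def
  by (simp add: bounded_linear_Blinfun_apply blinfun.bounded_linear_left)



context
  fixes mu :: "'a::real_normed_vector \<Rightarrow> 'a \<Rightarrow> 'a"
    and p1 :: "'a \<Rightarrow> 'x::real_normed_vector \<Rightarrow> 'x" and p2 :: "'x \<Rightarrow> 'a \<Rightarrow> 'x"
  assumes bm: "bounded_bilinear mu" and b1: "bounded_bilinear p1" and b2: "bounded_bilinear p2"
    and A1: "\<And>a b x. p1 (mu a b) x = p1 a (p1 b x)"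
    and A2: "\<And>a b x. p2 x (mu a b) = p2 (p2 x a) b"
    and A3: "\<And>a b x. p1 a (p2 x b) = p2 (p1 a x) b"
begin

lemma L0: "adj p1 xs (mu a b) = adj p1 (adj p1 xs a) b"
  by (rule blinfun_eqI) (simp add: bm b1 b2 A1)
lemma L1: "adj mu (adj (adj p1) F xs) a = adj (adj p1) F (adj p1 xs a)"
  by (rule blinfun_eqI) (simp add: bm b1 b2 L0)
lemma L2: "adj (adj mu) b (adj (adj p1) F xs) = adj (adj p1) (adj (adj (adj p1)) b F) xs"
  by (rule blinfun_eqI) (simp add: bm b1 b2 L1)
lemma L3: "adj (adj (adj p1)) (adj (adj (adj mu)) a b) F = adj (adj (adj p1)) a (adj (adj (adj p1)) b F)"
  by (rule blinfun_eqI) (simp add: bm b1 b2 L2)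

lemma M0: "adj mu (adj p2 xs x) a = adj p2 xs (p2 x a)"
  by (rule blinfun_eqI) (simp add: bm b1 b2 A2)
lemma M1: "adj (adj mu) b (adj p2 xs x) = adj p2 (adj (adj p2) b xs) x"
  by (rule blinfun_eqI) (simp add: bm b1 b2 M0)
lemma M2: "adj (adj p2) (adj (adj (adj mu)) a b) xs = adj (adj p2) a (adj (adj p2) b xs)"
  by (rule blinfun_eqI) (simp add: bm b1 b2 M1)
lemma M3: "adj (adj (adj p2)) F (adj (adj (adj mu)) a b) = adj (adj (adj p2)) (adj (adj (adj p2)) F a) b"
  by (rule blinfun_eqI) (simp add: bm b1 b2 M2)

lemma N0: "adj p2 xs (p1 b x) = adj p2 (adj p1 xs b) x"
  by (rule blinfun_eqI) (simp add: bm b1 b2 A3)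
lemma N1: "adj p1 (adj (adj p2) a xs) b = adj (adj p2) a (adj p1 xs b)"
  by (rule blinfun_eqI) (simp add: bm b1 b2 N0)
lemma N2: "adj (adj p1) F (adj (adj p2) a xs) = adj (adj p1) (adj (adj (adj p2)) F a) xs"
  by (rule blinfun_eqI) (simp add: bm b1 b2 N1)
lemma N3: "adj (adj (adj p2)) (adj (adj (adj p1)) b F) a = adj (adj (adj p1)) b (adj (adj (adj p2)) F a)"
  by (rule blinfun_eqI) (simp add: bm b1 b2 N2)

lemma box_deriv:
  fixes \<xi>
  defines "R \<equiv> adj (adj (adj (adj p1)))" and "L \<equiv> flip (adj (flip (adj (adj (adj p2)))))"
  shows "R \<xi> (adj (adj (adj mu)) a b) - L (adj (adj (adj mu)) a b) \<xi>
     = R (R \<xi> a - L a \<xi>) b + L a (R \<xi> b - L b \<xi>)"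
proof -
  interpret R: bounded_bilinear R unfolding R_def by (simp add: b1)
  interpret L: bounded_bilinear L unfolding L_def by (simp add: b2)
  have 1: "R \<xi> (adj (adj (adj mu)) a b) = R (R \<xi> a) b"
    unfolding R_def by (rule blinfun_eqI) (simp add: bm b1 b2 L3)
  have 2: "L (adj (adj (adj mu)) a b) \<xi> = L a (L b \<xi>)"
    unfolding L_def by (rule blinfun_eqI) (simp add: bm b1 b2 M3)
  have 3: "R (L a \<xi>) b = L a (R \<xi> b)"
    unfolding L_def R_def by (rule blinfun_eqI) (simp add: bm b1 b2 N3)
  show ?thesis by (simp add: 1 2 3 R.diff_left L.diff_right)
qed

end


lemma weak_topspace[simp]: "topspace (weak_topology :: 'b::real_normed_vector topology) = UNIV"
proof -
  have "UNIV \<in> {blinfun_apply f -` U | (f :: 'b \<Rightarrow>\<^sub>L real) U. open U}" by force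
  then have "UNIV \<subseteq> \<Union> {blinfun_apply f -` U | (f :: 'b \<Rightarrow>\<^sub>L real) U. open U}" by (rule Union_upper)
  then show ?thesis unfolding weak_topology_def topology_generated_by_topspace by (rule top.extremum_uniqueI)
qed

lemma weak_open: fixes f :: "'b::real_normed_vector \<Rightarrow>\<^sub>L real" assumes "open U" shows "openin weak_topology (blinfun_apply f -` U)"
proof -
  have "blinfun_apply f -` U \<in> {blinfun_apply g -` W | (g :: 'b \<Rightarrow>\<^sub>L real) W. open W}"
    using assms by blast
  then show ?thesis unfolding weak_topology_def by (rule topology_generated_by_Basis)
qed

lemma weak_Hausdorff: "Hausdorff_space (weak_topology :: ('x::real_normed_vector \<Rightarrow>\<^sub>L real) topology)"
  unfolding Hausdorff_space_def
proof (intro allI impI)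
  fix u v :: "'x \<Rightarrow>\<^sub>L real"
  assume "u \<in> topspace weak_topology \<and> v \<in> topspace weak_topology \<and> u \<noteq> v"
  then obtain x where x: "blinfun_apply u x \<noteq> blinfun_apply v x" using blinfun_eqI by blast
  define d where "d = \<bar>blinfun_apply u x - blinfun_apply v x\<bar> / 2"
  have d: "d > 0" using x by (simp add: d_def)
  let ?F = "can x :: ('x \<Rightarrow>\<^sub>L real) \<Rightarrow>\<^sub>L real"
  show "\<exists>U V. openin weak_topology U \<and> openin weak_topology V \<and> u \<in> U \<and> v \<in> V \<and> disjnt U V"
  proof (intro exI conjI)
    show "openin weak_topology (blinfun_apply ?F -` ball (blinfun_apply u x) d)" by (rule weak_open) simp
    show "openin weak_topology (blinfun_apply ?F -` ball (blinfun_apply v x) d)" by (rule weak_open) simp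
    show "u \<in> blinfun_apply ?F -` ball (blinfun_apply u x) d" using d by simp
    show "v \<in> blinfun_apply ?F -` ball (blinfun_apply v x) d" using d by simp
    show "disjnt (blinfun_apply ?F -` ball (blinfun_apply u x) d) (blinfun_apply ?F -` ball (blinfun_apply v x) d)"
      unfolding disjnt_def d_def by (auto simp: dist_real_def abs_if split: if_split_asm)
  qed
qed

lemma weakly_compact_crit:
  fixes D :: "'a::real_normed_vector \<Rightarrow> ('x::real_normed_vector \<Rightarrow>\<^sub>L real)"
  assumes bl: "bounded_linear D"
    and key: "\<And>a2. \<exists>W. \<forall>F. blinfun_apply a2 (ladj D F) = blinfun_apply F W"
  shows "weakly_compact_op D"
proof -
  interpret D: bounded_linear D by fact
  obtain B where B: "\<And>a. norm (D a) \<le> norm a * B" "B > 0" using D.pos_bounded by auto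
  define P where "P = product_topology (\<lambda>_. euclideanreal) (UNIV :: ('a \<Rightarrow>\<^sub>L real) set)"
  define Lin where "Lin = {\<phi> :: ('a \<Rightarrow>\<^sub>L real) \<Rightarrow> real. (\<forall>f g. \<phi> (f + g) = \<phi> f + \<phi> g) \<and> (\<forall>r f. \<phi> (r *\<^sub>R f) = r * \<phi> f)}"
  define K where "K = PiE UNIV (\<lambda>f. cball 0 (norm f)) \<inter> Lin"
  have topP: "topspace P = UNIV" unfolding P_def by simp
  have projc: "continuous_map P euclideanreal (\<lambda>\<phi>. \<phi> h)" for h
    unfolding P_def by (rule continuous_map_product_projection) simp
  have c1: "compactin P (PiE UNIV (\<lambda>f. cball 0 (norm f)))"
    unfolding P_def by (simp add: compactin_PiE)
  have c2: "closedin P Lin"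
  proof -
    define S1 where "S1 = (\<lambda>p::('a \<Rightarrow>\<^sub>L real) \<times> ('a \<Rightarrow>\<^sub>L real). {\<phi> \<in> topspace P. \<phi> (fst p + snd p) - \<phi> (fst p) - \<phi> (snd p) \<in> {0}})"
    define S2 where "S2 = (\<lambda>p::real \<times> ('a \<Rightarrow>\<^sub>L real). {\<phi> \<in> topspace P. \<phi> (fst p *\<^sub>R snd p) - fst p * \<phi> (snd p) \<in> {0}})"
    have eq: "Lin = \<Inter> (range S1) \<inter> \<Inter> (range S2)"
      unfolding Lin_def topP S1_def S2_def by (auto simp: diff_eq_eq add.commute)
    have h1: "closedin P (S1 p)" for p
      unfolding S1_def by (rule closedin_continuous_map_preimage[where Y=euclideanreal]) (intro continuous_map_diff projc, simp)
    have h2: "closedin P (S2 p)" for p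
      unfolding S2_def by (rule closedin_continuous_map_preimage[where Y=euclideanreal]) (intro continuous_map_diff continuous_map_real_mult_left projc, simp)
    have "closedin P (\<Inter> (range S1))" by (rule closedin_Inter) (auto intro: h1)
    moreover have "closedin P (\<Inter> (range S2))" by (rule closedin_Inter) (auto intro: h2)
    ultimately show ?thesis unfolding eq by (rule closedin_Int)
  qed
  have cK: "compactin P K" unfolding K_def by (rule compact_Int_closedin[OF c1 c2])
  define E where "E \<phi> = (SOME W. \<forall>F. blinfun_apply (Blinfun \<phi>) (ladj D F) = blinfun_apply F W)" for \<phi>
  have Kbl: "bounded_linear \<phi>" if "\<phi> \<in> K" for \<phi>
  proof (rule bounded_linear_intro[where K=1])
    have L: "\<phi> \<in> Lin" and C: "\<And>f. \<phi> f \<in> cball 0 (norm f)" using that unfolding K_def by auto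
    fix f g and r :: real
    show "\<phi> (f + g) = \<phi> f + \<phi> g" "\<phi> (r *\<^sub>R f) = r *\<^sub>R \<phi> f" using L unfolding Lin_def by auto
    show "norm (\<phi> f) \<le> norm f * 1" using C[of f] by (simp add: dist_real_def)
  qed
  have EF: "blinfun_apply F (E \<phi>) = \<phi> (ladj D F)" if "\<phi> \<in> K" for \<phi> F
  proof -
    have "\<exists>W. \<forall>F. blinfun_apply (Blinfun \<phi>) (ladj D F) = blinfun_apply F W" by (rule key)
    then have "\<forall>F. blinfun_apply (Blinfun \<phi>) (ladj D F) = blinfun_apply F (E \<phi>)"
      unfolding E_def by (rule someI_ex)
    then show ?thesis using Kbl[OF that] by (simp add: bounded_linear_Blinfun_apply)
  qed
  have sub: "D ` cball 0 1 \<subseteq> E ` K"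
  proof
    fix y assume "y \<in> D ` cball 0 1"
    then obtain a where a: "norm a \<le> 1" "y = D a" by auto
    define \<phi> where "\<phi> = (\<lambda>f::'a \<Rightarrow>\<^sub>L real. blinfun_apply f a)"
    have "\<phi> \<in> K"
    proof -
      have "\<bar>blinfun_apply f a\<bar> \<le> norm f" for f
      proof -
        have "\<bar>blinfun_apply f a\<bar> \<le> norm f * norm a" using norm_blinfun[of f a] by simp
        also have "\<dots> \<le> norm f * 1" by (rule mult_left_mono) (use a in auto)
        finally show ?thesis by simp
      qed
      then show ?thesis unfolding K_def Lin_def \<phi>_def
        by (auto simp: dist_real_def blinfun.add_left blinfun.scaleR_left)
    qed
    moreover have "E \<phi> = D a"
    proof (rule blinfun_eqI)
      fix x
      have "blinfun_apply (can x) (E \<phi>) = \<phi> (ladj D (can x))" by (rule EF[OF \<open>\<phi> \<in> K\<close>])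
      then show "blinfun_apply (E \<phi>) x = blinfun_apply (D a) x" by (simp add: \<phi>_def bl)
    qed
    ultimately show "y \<in> E ` K" using a by (metis image_eqI)
  qed
  have cont: "continuous_map (subtopology P K) weak_topology E"
    unfolding weak_topology_def continuous_on_generated_topo_iff
  proof (intro conjI allI impI)
    fix U assume "U \<in> {blinfun_apply f -` W | (f :: ('x \<Rightarrow>\<^sub>L real) \<Rightarrow>\<^sub>L real) W. open W}"
    then obtain F :: "('x \<Rightarrow>\<^sub>L real) \<Rightarrow>\<^sub>L real" and V where U: "U = blinfun_apply F -` V" "open V" by blast
    have eq: "E -` U \<inter> topspace (subtopology P K) = {\<phi> \<in> topspace P. \<phi> (ladj D F) \<in> V} \<inter> K"
      using EF by (auto simp: U topP)
    have "openin P {\<phi> \<in> topspace P. \<phi> (ladj D F) \<in> V}"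
      by (rule openin_continuous_map_preimage[OF projc]) (simp add: U)
    then show "openin (subtopology P K) (E -` U \<inter> topspace (subtopology P K))"
      unfolding eq openin_subtopology by blast
  next
    have "UNIV \<in> {blinfun_apply f -` U | (f :: ('x \<Rightarrow>\<^sub>L real) \<Rightarrow>\<^sub>L real) U. open U}" by force
    then show "E ` topspace (subtopology P K) \<subseteq> \<Union> {blinfun_apply f -` U | (f :: ('x \<Rightarrow>\<^sub>L real) \<Rightarrow>\<^sub>L real) U. open U}"
      by blast
  qed
  have cEK: "compactin weak_topology (E ` K)"
    by (rule image_compactin[OF _ cont]) (simp add: compactin_subtopology cK)
  have clEK: "closedin weak_topology (E ` K)" by (rule compactin_imp_closedin[OF weak_Hausdorff cEK])
  have "weak_topology closure_of (D ` cball 0 1) \<subseteq> E ` K" by (rule closure_of_minimal[OF sub clEK])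
  then have "weak_topology closure_of (D ` cball 0 1) = E ` K \<inter> weak_topology closure_of (D ` cball 0 1)" by blast
  moreover have "compactin weak_topology (E ` K \<inter> weak_topology closure_of (D ` cball 0 1))"
    by (rule compact_Int_closedin[OF cEK closedin_closure_of])
  ultimately show ?thesis unfolding weakly_compact_op_def using bl by simp
qed


theorem proposition4p6:
  fixes p1 :: "'a::{real_normed_algebra,banach} \<Rightarrow> 'x::banach \<Rightarrow> 'x"
    and p2 :: "'x \<Rightarrow> 'a \<Rightarrow> 'x"
    and D :: "'a \<Rightarrow> ('x \<Rightarrow>\<^sub>L real)"
    and xs :: "'x \<Rightarrow>\<^sub>L real"
  assumes "banach_module p1 p2"
    and "arens_regular p1" and "arens_regular p2"
    and "\<forall>a. D a = adj p1 xs a - flip (adj (flip p2)) a xs"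
  shows "weakly_compact_op D \<and>
         inner_derivation (adj (adj (adj ((*) :: 'a \<Rightarrow> 'a \<Rightarrow> 'a))))
           (flip (adj (flip (adj (adj (adj p2)))))) (adj (adj (adj (adj p1))))
           (ladj (ladj D)) \<and>
         inner_derivation (flip (adj (adj (adj (flip ((*) :: 'a \<Rightarrow> 'a \<Rightarrow> 'a))))))
           (flip (adj (adj (adj (adj (flip p2)))))) (adj (flip (adj (adj (adj (flip p1))))))
           (ladj (ladj D)) \<and>
         (\<forall>a2. ladj (ladj D) a2
            = adj (adj (adj (adj p1))) (can xs) a2 - flip (adj (flip (adj (adj (adj p2))))) a2 (can xs)) \<and>
         (\<forall>a2. ladj (ladj D) a2
            = adj (flip (adj (adj (adj (flip p1))))) (can xs) a2 - flip (adj (adj (adj (adj (flip p2))))) a2 (can xs))"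
proof -
  have bb1: "bounded_bilinear p1" and bb2: "bounded_bilinear p2"
    and A1: "\<And>a b x. p1 (a * b) x = p1 a (p1 b x)"
    and A2: "\<And>a b x. p2 x (a * b) = p2 (p2 x a) b"
    and A3: "\<And>a b x. p1 a (p2 x b) = p2 (p1 a x) b"
    using assms(1) unfolding banach_module_def by auto
  have bbm: "bounded_bilinear ((*) :: 'a \<Rightarrow> 'a \<Rightarrow> 'a)" by (rule bounded_bilinear_mult)
  have r1: "adj (adj (adj p1)) a2 F = adj (adj (adj (flip p1))) F a2" for a2 F
    proof -
    have "adj (adj (adj p1)) a2 F = flip (adj (adj (adj (flip p1)))) a2 F"
      using assms(2) unfolding arens_regular_def by simp
    then show ?thesis by simp
  qed
  have r2: "adj (adj (adj p2)) F a2 = adj (adj (adj (flip p2))) a2 F" for a2 F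
    proof -
    have "adj (adj (adj p2)) F a2 = flip (adj (adj (adj (flip p2)))) F a2"
      using assms(3) unfolding arens_regular_def by simp
    then show ?thesis by simp
  qed
  have r1': "blinfun_apply a2 (adj (adj p1) F xs) = blinfun_apply F (adj (adj (flip p1)) a2 xs)" for a2 F
  proof -
    have "blinfun_apply (adj (adj (adj p1)) a2 F) xs = blinfun_apply (adj (adj (adj (flip p1))) F a2) xs"
      by (simp only: r1)
    then show ?thesis by (simp add: bb1)
  qed
  have r2': "blinfun_apply a2 (adj (adj (flip p2)) F xs) = blinfun_apply F (adj (adj p2) a2 xs)" for a2 F
  proof -
    have "blinfun_apply (adj (adj (adj p2)) F a2) xs = blinfun_apply (adj (adj (adj (flip p2))) a2 F) xs"
      by (simp only: r2)
    then show ?thesis by (simp add: bb2)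
  qed
  have Dfun: "D = (\<lambda>a. adj p1 xs a - adj (flip p2) xs a)" using assms(4) by auto
  have blD: "bounded_linear D" unfolding Dfun
    by (intro bounded_linear_sub bounded_bilinear.bounded_linear_right bb_adj bb_flip bb1 bb2)
  have ladjD: "ladj D F = adj (adj p1) F xs - adj (adj (flip p2)) F xs" for F
    by (rule blinfun_eqI) (simp add: blD bb1 bb2 assms(4) blinfun.diff_right)
  have c: "blinfun_apply a2 (ladj D F) = blinfun_apply (adj (adj (adj p1)) a2 F) xs - blinfun_apply (adj (adj (adj (flip p2))) a2 F) xs" for a2 F
    by (simp add: ladjD blinfun.diff_right bb1 bb2)
  have LL: "blinfun_apply (ladj (ladj D) a2) F = blinfun_apply a2 (ladj D F)" for a2 F
    by (simp add: blD)
  have fbox: "ladj (ladj D) a2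
            = adj (adj (adj (adj p1))) (can xs) a2 - flip (adj (flip (adj (adj (adj p2))))) a2 (can xs)" for a2
    by (rule blinfun_eqI) (simp add: LL c r2 bb1 bb2)
  have floz: "ladj (ladj D) a2
            = adj (flip (adj (adj (adj (flip p1))))) (can xs) a2 - flip (adj (adj (adj (adj (flip p2))))) a2 (can xs)" for a2
    by (rule blinfun_eqI) (simp add: LL c r1 bb1 bb2)
  have wc: "weakly_compact_op D"
  proof (rule weakly_compact_crit[OF blD])
    fix a2
    show "\<exists>W. \<forall>F. blinfun_apply a2 (ladj D F) = blinfun_apply F W"
      by (rule exI[of _ "adj (adj (flip p1)) a2 xs - adj (adj p2) a2 xs"])
        (simp add: c r1' r2' bb1 bb2 blinfun.diff_right)
  qed
  have blDD: "bounded_linear (ladj (ladj D))" by (simp add: blD)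
  have ib: "inner_derivation (adj (adj (adj ((*) :: 'a \<Rightarrow> 'a \<Rightarrow> 'a))))
           (flip (adj (flip (adj (adj (adj p2)))))) (adj (adj (adj (adj p1))))
           (ladj (ladj D))"
    unfolding inner_derivation_def derivation_def
  proof (intro conjI blDD allI exI)
    fix a b
    show "ladj (ladj D) (adj (adj (adj (*))) a b) =
       adj (adj (adj (adj p1))) (ladj (ladj D) a) b + flip (adj (flip (adj (adj (adj p2))))) a (ladj (ladj D) b)"
      unfolding fbox by (rule box_deriv[OF bbm bb1 bb2 A1 A2 A3])
  next
    fix a show "ladj (ladj D) a = adj (adj (adj (adj p1))) (can xs) a - flip (adj (flip (adj (adj (adj p2))))) a (can xs)"
      by (rule fbox)
  qed
  have il: "inner_derivation (flip (adj (adj (adj (flip ((*) :: 'a \<Rightarrow> 'a \<Rightarrow> 'a))))))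
           (flip (adj (adj (adj (adj (flip p2)))))) (adj (flip (adj (adj (adj (flip p1))))))
           (ladj (ladj D))"
    unfolding inner_derivation_def derivation_def
  proof (intro conjI blDD allI exI)
    fix a b
    have A1': "\<And>a b x. flip p2 (flip (*) a b) x = flip p2 a (flip p2 b x)" by (simp add: A2)
    have A2': "\<And>a b x. flip p1 x (flip (*) a b) = flip p1 (flip p1 x a) b" by (simp add: A1)
    have A3': "\<And>a b x. flip p2 a (flip p1 x b) = flip p1 (flip p2 a x) b" by (simp add: A3)
    have bR: "bounded_bilinear (adj (adj (adj (adj (flip p2)))))" by (simp add: bb2)
    have bG: "bounded_bilinear (adj (flip (adj (adj (adj (flip p1))))))" by (simp add: bb1)
    define R' where "R' = adj (adj (adj (adj (flip p2))))"
    define G where "G = adj (flip (adj (adj (adj (flip p1)))))"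
    define m' where "m' = adj (adj (adj (flip ((*) :: 'a \<Rightarrow> 'a \<Rightarrow> 'a))))"
    define \<xi> where "\<xi> = can xs"
    have X0: "R' \<xi> (m' b a) - flip (adj (flip (adj (adj (adj (flip p1)))))) (m' b a) \<xi>
       = R' (R' \<xi> b - flip (adj (flip (adj (adj (adj (flip p1)))))) b \<xi>) a
         + flip (adj (flip (adj (adj (adj (flip p1)))))) b (R' \<xi> a - flip (adj (flip (adj (adj (adj (flip p1)))))) a \<xi>)"
      unfolding R'_def m'_def
      by (rule box_deriv) (simp_all add: bbm bb1 bb2 A1 A2 A3)
    have e2: "\<And>u \<eta>. flip (adj (flip (adj (adj (adj (flip p1)))))) u \<eta> = G \<eta> u" unfolding G_def by simp
    have e1: "\<And>u \<eta>. flip (adj (adj (adj (adj (flip p2))))) u \<eta> = R' \<eta> u" unfolding R'_def by simp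
    have e3: "flip m' a b = m' b a" by (simp only: flip_apply)
    have X: "R' \<xi> (m' b a) - G \<xi> (m' b a) = (R' (R' \<xi> b) a - R' (G \<xi> b) a) + (G (R' \<xi> a) b - G (G \<xi> a) b)"
      using X0 unfolding e2 by (simp only: bounded_bilinear.diff_left[OF bR[folded R'_def]] bounded_bilinear.diff_left[OF bG[folded G_def]])
    have "ladj (ladj D) (flip m' a b) = G \<xi> (m' b a) - R' \<xi> (m' b a)"
      unfolding e3 floz e1 G_def[symmetric] \<xi>_def[symmetric] by (rule refl)
    also have "\<dots> = (G (G \<xi> a) b - G (R' \<xi> a) b) + (R' (G \<xi> b) a - R' (R' \<xi> b) a)"
      using X by (simp add: algebra_simps)
    also have "\<dots> = G (ladj (ladj D) a) b + R' (ladj (ladj D) b) a"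
      unfolding floz e1 G_def[symmetric] \<xi>_def[symmetric]
      by (simp only: bounded_bilinear.diff_left[OF bR[folded R'_def]] bounded_bilinear.diff_left[OF bG[folded G_def]])
    finally show "ladj (ladj D) (flip (adj (adj (adj (flip (*))))) a b) =
       adj (flip (adj (adj (adj (flip p1))))) (ladj (ladj D) a) b + flip (adj (adj (adj (adj (flip p2))))) a (ladj (ladj D) b)"
      unfolding m'_def G_def R'_def by simp
  next
    fix a show "ladj (ladj D) a = adj (flip (adj (adj (adj (flip p1))))) (can xs) a - flip (adj (adj (adj (adj (flip p2))))) a (can xs)"
      by (rule floz)
  qed
  show ?thesis using wc ib il fbox floz by blast
qed

end
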